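(* Let $X$ be a compact metric space, $Y\subset[-1,1]$ compact, $H$ an RKHS of continuous functions on $X$ with closed unit ball $B_H$ and $\|f\|_\infty\le\|f\|_H$ for all $f\in H$, and $L:Y\times\mathbb R\to[0,\infty)$ continuous, convex in its second variable, satisfying for constants $\alpha\in[1,2]$, $c_L>0$: $\sup_{y\in Y}L(y,t)\le1+|t|^\alpha$ for all $t\in\mathbb R$ and $\sup_{y\in Y}|L(y,\cdot)|_{[-t,t]}|_1\le c_Lt^{\alpha-1}$ for all $t\ge0$. Let $P$ be a distribution on $X\times Y$ for which a minimizer $f^*_{L,P}$ of the $L$-risk exists, and suppose there are constants $v\ge0$, $c\ge1$, $\vartheta\in[0,1]$ and some $0<\lambda<1$ such that for all $f\in\lambda^{-1/2}B_H$ $$\mathbb E_P(L\circ f-L\circ f^*_{L,P})^2\le c(\|f\|_\infty+1)^v\big(\mathbb E_P(L\circ f-L\circ f^*_{L,P})\big)^\vartheta.$$ Then for all $g\in\mathcal G(\lambda)$ $$\mathbb E_Pg^2\le16c\Big(\Big(\frac{\mathbb E_Pg}{\lambda}\Big)^{1/2}+\Big(\frac{a(\lambda)}{\lambda}\Big)^{1/2}+1\Big)^v\Big((\mathbb E_Pg)^\vartheta+2a^\vartheta(\lambda)\Big).$$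
   Context: $|h|_1$ is the Lipschitz constant of $h$; $L\circ f$ denotes $(x,y)\mapsto L(y,f(x))$; $\mathcal R_{L,P}(f):=\mathbb E_PL\circ f$, $\mathcal R^*_{L,P}:=\inf\{\mathcal R_{L,P}(f):f\text{ measurable}\}$, attained by $f^*_{L,P}$. For $\lambda>0$, $f_{P,\lambda}:=\arg\min_{f\in H}(\lambda\|f\|_H^2+\mathcal R_{L,P}(f))$ and $a(\lambda):=\lambda\|f_{P,\lambda}\|_H^2+\mathcal R_{L,P}(f_{P,\lambda})-\mathcal R^*_{L,P}$; $a^\vartheta(\lambda)$ means $(a(\lambda))^\vartheta$, with $0^0:=1$. $C_\lambda(x,y,f):=\lambda\|f\|_H^2+L(y,f(x))$, $C_\lambda\circ f:=C_\lambda(\cdot,\cdot,f)$, and $\mathcal G(\lambda):=\{C_\lambda\circ f-C_\lambda\circ f_{P,\lambda}: f\in\lambda^{-1/2}B_H\}$. *)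

theory Defs
  imports "HOL-Probability.Probability"
begin

text \<open>Power with the convention 0 to the 0 equals 1 (used for a^theta and (E g)^theta).\<close>
definition pow0 :: "real \<Rightarrow> real \<Rightarrow> real" where
  "pow0 x e = (if e = 0 then 1 else x powr e)"

definition supnorm :: "('x \<Rightarrow> real) \<Rightarrow> 'x set \<Rightarrow> real" where
  "supnorm f X = (SUP x\<in>X. \<bar>f x\<bar>)"

definition risk :: "(real \<Rightarrow> real \<Rightarrow> real) \<Rightarrow> ('x \<times> real) measure \<Rightarrow> ('x \<Rightarrow> real) \<Rightarrow> ennreal" where
  "risk L P f = (\<integral>\<^sup>+ z. ennreal (L (snd z) (f (fst z))) \<partial>P)"

definition bayes_minimizer :: "(real \<Rightarrow> real \<Rightarrow> real) \<Rightarrow> ('x \<times> real) measure \<Rightarrow> ('x \<Rightarrow> real) \<Rightarrow> bool" where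
  "bayes_minimizer L P fs \<longleftrightarrow>
     (\<lambda>z. fs (fst z)) \<in> borel_measurable P \<and>
     (\<forall>f. (\<lambda>z. f (fst z)) \<in> borel_measurable P \<longrightarrow> risk L P fs \<le> risk L P f)"

text \<open>h is the regularized minimizer f_{P,lambda} over the RKHS (elements of 'h,
  evaluated via evl).\<close>
definition reg_minimizer ::
  "('h::real_normed_vector \<Rightarrow> 'x \<Rightarrow> real) \<Rightarrow> (real \<Rightarrow> real \<Rightarrow> real) \<Rightarrow> ('x \<times> real) measure \<Rightarrow> real \<Rightarrow> 'h \<Rightarrow> bool" where
  "reg_minimizer evl L P lam h \<longleftrightarrow>
     (\<forall>h'. ennreal (lam * (norm h)\<^sup>2) + risk L P (evl h) \<le> ennreal (lam * (norm h')\<^sup>2) + risk L P (evl h'))"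

end

theory Submission
  imports Defs
begin

lemma powr_subadd:
  fixes x y t :: real
  assumes "0 \<le> x" "0 \<le> y" "0 < t" "t \<le> 1"
  shows "(x + y) powr t \<le> x powr t + y powr t"
proof (cases "x = 0 \<or> y = 0")
  case True then show ?thesis using assms by auto
next
  case False
  then have xp: "x > 0" and yp: "y > 0" using assms by auto
  have e: "\<And>z::real. z > 0 \<Longrightarrow> z powr t = z * z powr (t - 1)"
    by (simp add: powr_add[symmetric] powr_mult_base)
  have "x powr (t-1) \<ge> (x+y) powr (t-1)" using xp yp assms by (intro powr_mono2') auto
  moreover have "y powr (t-1) \<ge> (x+y) powr (t-1)" using xp yp assms by (intro powr_mono2') auto
  ultimately have "x * x powr (t-1) + y * y powr (t-1) \<ge> x * (x+y) powr (t-1) + y * (x+y) powr (t-1)"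
    using xp yp by (intro add_mono mult_left_mono) auto
  then show ?thesis using e[of x] e[of y] e[of "x+y"] xp yp by (simp add: algebra_simps)
qed

lemma pow0_nonneg: "0 \<le> pow0 x t"
  by (simp add: pow0_def)

lemma pow0_mono: "0 \<le> x \<Longrightarrow> x \<le> y \<Longrightarrow> 0 \<le> t \<Longrightarrow> pow0 x t \<le> pow0 y t"
  by (simp add: pow0_def powr_mono2)

lemma pow0_subadd: "0 \<le> x \<Longrightarrow> 0 \<le> y \<Longrightarrow> 0 \<le> t \<Longrightarrow> t \<le> 1 \<Longrightarrow> pow0 (x+y) t \<le> pow0 x t + pow0 y t"
  by (auto simp: pow0_def intro: powr_subadd)

lemma sq_le_pow0: "0 \<le> s \<Longrightarrow> s \<le> 1 \<Longrightarrow> 0 \<le> t \<Longrightarrow> t \<le> 1 \<Longrightarrow> s\<^sup>2 \<le> pow0 s t"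
proof -
  assume a: "0 \<le> s" "s \<le> 1" "0 \<le> t" "t \<le> 1"
  have "s\<^sup>2 \<le> s" using a by (simp add: power2_eq_square mult_left_le)
  moreover have "s \<le> pow0 s t"
  proof (cases "t = 0")
    case True then show ?thesis using a by (simp add: pow0_def)
  next
    case False
    have "s powr 1 \<le> s powr t" using a by (intro powr_mono') auto
    then show ?thesis using a False by (cases "s = 0") (auto simp: pow0_def)
  qed
  ultimately show ?thesis by linarith
qed

lemma sq4:
  fixes w x y u :: real
  shows "(w + x - y - u)\<^sup>2 \<le> 4 * w\<^sup>2 + 4 * x\<^sup>2 + 4 * y\<^sup>2 + 4 * u\<^sup>2"
proof -
  have "4 * w\<^sup>2 + 4 * x\<^sup>2 + 4 * y\<^sup>2 + 4 * u\<^sup>2 - (w + x - y - u)\<^sup>2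
      = (w - x)\<^sup>2 + (w + y)\<^sup>2 + (w + u)\<^sup>2 + (x + y)\<^sup>2 + (x + u)\<^sup>2 + (y - u)\<^sup>2"
    by (simp add: power2_eq_square algebra_simps)
  moreover have "0 \<le> (w - x)\<^sup>2 + (w + y)\<^sup>2 + (w + u)\<^sup>2 + (x + y)\<^sup>2 + (x + u)\<^sup>2 + (y - u)\<^sup>2"
    by simp
  ultimately show ?thesis by linarith
qed

lemma main_alg:
  fixes lam c v \<theta> nh np Rh Rp Rs Qh Qp Sh Sp G :: real
  assumes lam: "0 < lam" and c: "1 \<le> c" and v: "0 \<le> v" and th: "0 \<le> \<theta>" "\<theta> \<le> 1"
    and nh: "0 \<le> nh" and np: "0 \<le> np"
    and Rsh: "Rs \<le> Rh" and Rsp: "Rs \<le> Rp"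
    and reg: "lam * np\<^sup>2 + Rp \<le> lam * nh\<^sup>2 + Rh"
    and nh1: "lam * nh\<^sup>2 \<le> 1" and np1: "lam * np\<^sup>2 \<le> 1"
    and Sh: "0 \<le> Sh" "Sh \<le> nh" and Sp: "0 \<le> Sp" "Sp \<le> np"
    and Qh: "Qh \<le> c * (Sh + 1) powr v * pow0 (Rh - Rs) \<theta>"
    and Qp: "Qp \<le> c * (Sp + 1) powr v * pow0 (Rp - Rs) \<theta>"
    and G: "G \<le> 4 * (lam * nh\<^sup>2)\<^sup>2 + 4 * Qh + 4 * (lam * np\<^sup>2)\<^sup>2 + 4 * Qp"
  shows "G \<le> 16 * c * (sqrt ((lam * nh\<^sup>2 + Rh - (lam * np\<^sup>2 + Rp)) / lam)
            + sqrt ((lam * np\<^sup>2 + Rp - Rs) / lam) + 1) powr v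
          * (pow0 (lam * nh\<^sup>2 + Rh - (lam * np\<^sup>2 + Rp)) \<theta> + 2 * pow0 (lam * np\<^sup>2 + Rp - Rs) \<theta>)"
proof -
  define s where "s = lam * nh\<^sup>2"
  define t where "t = lam * np\<^sup>2"
  define Eg where "Eg = lam * nh\<^sup>2 + Rh - (lam * np\<^sup>2 + Rp)"
  define a where "a = lam * np\<^sup>2 + Rp - Rs"
  define B where "B = sqrt (Eg / lam) + sqrt (a / lam) + 1"
  define M where "M = B powr v"
  have s0: "0 \<le> s" and t0: "0 \<le> t" using lam by (auto simp: s_def t_def)
  have Eg0: "0 \<le> Eg" using reg by (simp add: Eg_def)
  have a0: "0 \<le> a" using Rsp lam by (simp add: a_def add_increasing)
  have ta: "t \<le> a" using Rsp by (simp add: a_def t_def)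
  have EA: "s + (Rh - Rs) = Eg + a" by (simp add: Eg_def a_def s_def)
  have sqa: "sqrt (a/lam) \<ge> 0" using a0 lam by simp
  have sqe: "sqrt (Eg/lam) \<ge> 0" using Eg0 lam by simp
  have nh_eq: "nh = sqrt (s / lam)" using lam nh by (simp add: s_def)
  have np_eq: "np = sqrt (t / lam)" using lam np by (simp add: t_def)
  have "nh \<le> sqrt ((Eg + a) / lam)" unfolding nh_eq using EA Rsh lam
    by (intro real_sqrt_le_mono divide_right_mono) auto
  also have "\<dots> \<le> sqrt (Eg/lam) + sqrt (a/lam)"
    using sqrt_add_le_add_sqrt[of "Eg/lam" "a/lam"] Eg0 a0 lam by (simp add: add_divide_distrib)
  finally have nhB: "Sh + 1 \<le> B" using Sh by (simp add: B_def)
  have "np \<le> sqrt (a / lam)" unfolding np_eq using ta lam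
    by (intro real_sqrt_le_mono divide_right_mono) auto
  then have npB: "Sp + 1 \<le> B" using Sp sqe unfolding B_def by linarith
  have B1: "1 \<le> B" using sqa sqe by (simp add: B_def)
  have M1: "1 \<le> M" unfolding M_def using B1 v by (simp add: ge_one_powr_ge_zero)
  have MhM: "(Sh + 1) powr v \<le> M" unfolding M_def using nhB Sh v by (intro powr_mono2) auto
  have MpM: "(Sp + 1) powr v \<le> M" unfolding M_def using npB Sp v by (intro powr_mono2) auto
  have pEA: "pow0 (Eg + a) \<theta> \<le> pow0 Eg \<theta> + pow0 a \<theta>" using Eg0 a0 th by (intro pow0_subadd) auto
  have s2: "s\<^sup>2 \<le> pow0 (Eg + a) \<theta>"
    using sq_le_pow0[of s \<theta>] pow0_mono[of s "Eg + a" \<theta>] s0 nh1 th EA Rsh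
    by (auto simp: s_def)
  have dh: "pow0 (Rh - Rs) \<theta> \<le> pow0 (Eg + a) \<theta>"
    using pow0_mono[of "Rh - Rs" "Eg + a" \<theta>] s0 th EA Rsh by auto
  have t2: "t\<^sup>2 \<le> pow0 a \<theta>"
    using sq_le_pow0[of t \<theta>] pow0_mono[of t a \<theta>] t0 np1 th ta by (auto simp: t_def)
  have dp: "pow0 (Rp - Rs) \<theta> \<le> pow0 a \<theta>"
    using pow0_mono[of "Rp - Rs" a \<theta>] t0 th Rsp by (auto simp: a_def t_def)
  have P1: "pow0 (Eg + a) \<theta> \<ge> 0" "pow0 a \<theta> \<ge> 0" "pow0 Eg \<theta> \<ge> 0" by (auto simp: pow0_nonneg)
  have cM: "1 \<le> c * M" using c M1 by (metis mult_mono' order.trans mult_1_right zero_le_one order_refl) 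
  have "Qh \<le> c * M * pow0 (Eg + a) \<theta>"
  proof -
    have "(Sh + 1) powr v * pow0 (Rh - Rs) \<theta> \<le> M * pow0 (Eg + a) \<theta>"
      using MhM dh M1 pow0_nonneg[of "Rh - Rs" \<theta>] by (intro mult_mono) auto
    then have "c * ((Sh + 1) powr v * pow0 (Rh - Rs) \<theta>) \<le> c * (M * pow0 (Eg + a) \<theta>)"
      using c by (intro mult_left_mono) auto
    then show ?thesis using Qh by (simp add: mult.assoc)
  qed
  moreover have "Qp \<le> c * M * pow0 a \<theta>"
  proof -
    have "(Sp + 1) powr v * pow0 (Rp - Rs) \<theta> \<le> M * pow0 a \<theta>"
      using MpM dp M1 pow0_nonneg[of "Rp - Rs" \<theta>] by (intro mult_mono) auto
    then have "c * ((Sp + 1) powr v * pow0 (Rp - Rs) \<theta>) \<le> c * (M * pow0 a \<theta>)"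
      using c by (intro mult_left_mono) auto
    then show ?thesis using Qp by (simp add: mult.assoc)
  qed
  moreover have "pow0 (Eg + a) \<theta> \<le> c * M * pow0 (Eg + a) \<theta>"
    using cM P1 mult_right_mono[of 1 "c*M" "pow0 (Eg + a) \<theta>"] by simp
  moreover have "pow0 a \<theta> \<le> c * M * pow0 a \<theta>"
    using cM P1 mult_right_mono[of 1 "c*M" "pow0 a \<theta>"] by simp
  moreover have "c * M * pow0 (Eg + a) \<theta> \<le> c * M * (pow0 Eg \<theta> + pow0 a \<theta>)"
    using pEA cM by (intro mult_left_mono) auto
  moreover have cMa: "c * M * pow0 a \<theta> \<ge> 0" using cM P1 by simp
  moreover have cME: "c * M * pow0 Eg \<theta> \<ge> 0" using cM P1 by simp
  moreover have "G \<le> 4 * s\<^sup>2 + 4 * Qh + 4 * t\<^sup>2 + 4 * Qp" using G by (simp add: s_def t_def)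
  ultimately have "G \<le> 8 * (c * M * pow0 Eg \<theta>) + 16 * (c * M * pow0 a \<theta>)"
    using s2 t2 by (simp only: distrib_left)
  also have "\<dots> \<le> 16 * (c * M * (pow0 Eg \<theta> + 2 * pow0 a \<theta>))"
  proof -
    have "16 * (c * M * (pow0 Eg \<theta> + 2 * pow0 a \<theta>)) = 16 * (c * M * pow0 Eg \<theta>) + 32 * (c * M * pow0 a \<theta>)"
      by (simp add: algebra_simps)
    then show ?thesis using cMa cME by linarith
  qed
  finally show ?thesis by (simp add: M_def B_def Eg_def a_def mult.assoc)
qed
theorem lemma4p2:
  fixes X :: "'x::metric_space set" and Y :: "real set"
    and evl :: "'h::{real_inner, complete_space} \<Rightarrow> 'x \<Rightarrow> real"
    and L :: "real \<Rightarrow> real \<Rightarrow> real"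
    and P :: "('x \<times> real) measure"
    and fstar :: "'x \<Rightarrow> real" and fPl :: 'h
    and \<alpha> cL v c \<theta> lam :: real
  assumes X: "compact X"
    and Y: "compact Y" "Y \<subseteq> {-1..1}"
    and H_lin: "\<And>x. linear (\<lambda>h. evl h x)"
    and H_fun: "\<And>h. (\<forall>x\<in>X. evl h x = 0) \<Longrightarrow> h = 0"
    and H_cont: "\<And>h. continuous_on X (evl h)"
    and H_sup: "\<And>h x. x \<in> X \<Longrightarrow> \<bar>evl h x\<bar> \<le> norm h"
    and L_cont: "continuous_on (Y \<times> UNIV) (\<lambda>(y, t). L y t)"
    and L_nonneg: "\<And>y t. y \<in> Y \<Longrightarrow> 0 \<le> L y t"
    and L_convex: "\<And>y. y \<in> Y \<Longrightarrow> convex_on UNIV (L y)"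
    and \<alpha>: "1 \<le> \<alpha>" "\<alpha> \<le> 2" and cL: "cL > 0"
    and L_growth: "\<And>y t. y \<in> Y \<Longrightarrow> L y t \<le> 1 + \<bar>t\<bar> powr \<alpha>"
    and L_lip: "\<And>y t. y \<in> Y \<Longrightarrow> t \<ge> 0 \<Longrightarrow> (cL * t powr (\<alpha> - 1))-lipschitz_on {-t..t} (L y)"
    and P: "prob_space P" "sets P = sets (restrict_space borel (X \<times> Y))"
    and fstar: "bayes_minimizer L P fstar"
    and params: "v \<ge> 0" "c \<ge> 1" "0 \<le> \<theta>" "\<theta> \<le> 1" "0 < lam" "lam < 1"
    and variance: "\<And>h. norm h \<le> lam powr (-1/2) \<Longrightarrow>
        (\<integral>\<^sup>+ z. ennreal ((L (snd z) (evl h (fst z)) - L (snd z) (fstar (fst z)))\<^sup>2) \<partial>P)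
        \<le> ennreal (c * (supnorm (evl h) X + 1) powr v *
             pow0 (\<integral> z. (L (snd z) (evl h (fst z)) - L (snd z) (fstar (fst z))) \<partial>P) \<theta>)"
    and fPl: "reg_minimizer evl L P lam fPl"
  shows "\<forall>h. norm h \<le> lam powr (-1/2) \<longrightarrow>
    (let g = (\<lambda>z. (lam * (norm h)\<^sup>2 + L (snd z) (evl h (fst z)))
                 - (lam * (norm fPl)\<^sup>2 + L (snd z) (evl fPl (fst z))));
         a = lam * (norm fPl)\<^sup>2 + enn2real (risk L P (evl fPl)) - enn2real (risk L P fstar);
         Eg = (\<integral> z. g z \<partial>P)
     in (\<integral> z. (g z)\<^sup>2 \<partial>P)
        \<le> 16 * c * (sqrt (Eg / lam) + sqrt (a / lam) + 1) powr v * (pow0 Eg \<theta> + 2 * pow0 a \<theta>))"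
proof (intro allI impI)
  fix h :: 'h assume hn: "norm h \<le> lam powr (-1/2)"
  interpret prob_space P by (rule P(1))
  have spP: "space P = X \<times> Y" using sets_eq_imp_space_eq[OF P(2)] by (simp add: space_restrict_space)
  have Xne: "X \<noteq> {}" using not_empty spP by auto
  have contm: "f \<in> borel_measurable P" if "continuous_on (X \<times> Y) f" for f :: "'x \<times> real \<Rightarrow> real"
    by (subst measurable_cong_sets[OF P(2) refl]) (rule borel_measurable_continuous_on_restrict[OF that])
  have sndm: "snd \<in> borel_measurable P" by (rule contm) (intro continuous_intros)
  have mh: "(\<lambda>z. evl h' (fst z)) \<in> borel_measurable P" for h'
    by (rule contm, rule continuous_on_compose2[OF H_cont[of h'] continuous_on_fst]) auto
  have measL: "(\<lambda>z. L (snd z) (\<phi> z)) \<in> borel_measurable P" if phi: "\<phi> \<in> borel_measurable P" for \<phi>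
  proof -
    have m0: "(\<lambda>z. (snd z, \<phi> z)) \<in> borel_measurable P"
      using measurable_Pair[OF sndm phi] unfolding borel_prod .
    have m1: "(\<lambda>z. (snd z, \<phi> z)) \<in> P \<rightarrow>\<^sub>M restrict_space borel (Y \<times> UNIV)"
    proof (rule measurable_restrict_space2[OF _ m0])
      show "(\<lambda>z. (snd z, \<phi> z)) \<in> space P \<rightarrow> Y \<times> UNIV"
        unfolding spP by (auto simp: Pi_iff)
    qed
    have m2: "(\<lambda>(y, t). L y t) \<in> borel_measurable (restrict_space borel (Y \<times> UNIV))"
      by (rule borel_measurable_continuous_on_restrict[OF L_cont])
    show ?thesis using measurable_compose[OF m1 m2] by simp
  qed
  define Lf where "Lf h' = (\<lambda>z. L (snd z) (evl h' (fst z)))" for h'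
  define Ls where "Ls = (\<lambda>z. L (snd z) (fstar (fst z)))"
  define R where "R h' = (\<integral> z. Lf h' z \<partial>P)" for h'
  have Lfm: "Lf h' \<in> borel_measurable P" for h' unfolding Lf_def by (rule measL[OF mh])
  have Lfb: "0 \<le> Lf h' z \<and> Lf h' z \<le> 1 + norm h' powr \<alpha>" if "z \<in> space P" for h' z
  proof -
    have zz: "z \<in> X \<times> Y" using that spP by simp
    have z: "fst z \<in> X" "snd z \<in> Y" using mem_Times_iff[of z X Y] zz by simp_all
    have "\<bar>evl h' (fst z)\<bar> powr \<alpha> \<le> norm h' powr \<alpha>"
      using H_sup[OF z(1)] \<alpha> by (intro powr_mono2) auto
    then show ?thesis using L_growth[OF z(2), of "evl h' (fst z)"] L_nonneg[OF z(2)]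
      unfolding Lf_def by auto
  qed
  have Lf0: "AE z in P. 0 \<le> Lf h' z" for h'
    by (rule AE_I2) (use Lfb in blast)
  have Lfi: "integrable P (Lf h')" for h'
  proof -
    have "AE z in P. norm (Lf h' z) \<le> 1 + norm h' powr \<alpha>"
    proof (rule AE_I2)
      fix z assume "z \<in> space P"
      from Lfb[OF this, of h'] show "norm (Lf h' z) \<le> 1 + norm h' powr \<alpha>" by simp
    qed
    then show ?thesis by (rule integrable_const_bound[OF _ Lfm])
  qed
  have R0: "0 \<le> R h'" for h' unfolding R_def by (rule integral_nonneg_AE[OF Lf0])
  have riskh: "risk L P (evl h') = ennreal (R h')" for h'
  proof -
    have "risk L P (evl h') = (\<integral>\<^sup>+ z. ennreal (Lf h' z) \<partial>P)" unfolding risk_def Lf_def ..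
    also have "\<dots> = ennreal (R h')" unfolding R_def by (rule nn_integral_eq_integral[OF Lfi Lf0])
    finally show ?thesis .
  qed
  have fsm: "(\<lambda>z. fstar (fst z)) \<in> borel_measurable P" and fsmin: "\<And>f. (\<lambda>z. f (fst z)) \<in> borel_measurable P \<Longrightarrow> risk L P fstar \<le> risk L P f"
    using fstar unfolding bayes_minimizer_def by auto
  have Lsm: "Ls \<in> borel_measurable P" unfolding Ls_def by (rule measL[OF fsm])
  have Ls0: "0 \<le> Ls z" if "z \<in> space P" for z
  proof -
    have zz: "z \<in> X \<times> Y" using that spP by simp
    have "snd z \<in> Y" using mem_Times_iff[of z X Y] zz by simp
    then show ?thesis unfolding Ls_def by (rule L_nonneg)
  qed
  have Ls0': "AE z in P. 0 \<le> Ls z" by (rule AE_I2) (rule Ls0)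
  have rsfin: "risk L P fstar < top"
  proof -
    have "risk L P fstar \<le> ennreal (R 0)" using fsmin[OF mh[of 0]] unfolding riskh .
    then show ?thesis using ennreal_less_top[of "R 0"] by (rule order.strict_trans1)
  qed
  have nnLs: "(\<integral>\<^sup>+ z. ennreal (Ls z) \<partial>P) = risk L P fstar" unfolding risk_def Ls_def ..
  have Lsi: "integrable P Ls"
  proof (rule integrableI_bounded[OF Lsm])
    have "(\<integral>\<^sup>+ z. ennreal (norm (Ls z)) \<partial>P) = (\<integral>\<^sup>+ z. ennreal (Ls z) \<partial>P)"
      by (rule nn_integral_cong) (simp add: Ls0)
    then show "(\<integral>\<^sup>+ z. ennreal (norm (Ls z)) \<partial>P) < \<infinity>" using nnLs rsfin by simp
  qed
  define Rs where "Rs = (\<integral> z. Ls z \<partial>P)"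
  have Rs0: "0 \<le> Rs" unfolding Rs_def by (rule integral_nonneg_AE[OF Ls0'])
  have risks: "risk L P fstar = ennreal Rs"
    unfolding Rs_def nnLs[symmetric] by (rule nn_integral_eq_integral[OF Lsi Ls0'])
  have RsR: "Rs \<le> R h'" for h' using fsmin[OF mh[of h']] riskh[of h'] risks R0[of h'] by simp
  have reg: "lam * (norm fPl)\<^sup>2 + R fPl \<le> lam * (norm h')\<^sup>2 + R h'" for h'
  proof -
    have "ennreal (lam * (norm fPl)\<^sup>2) + ennreal (R fPl) \<le> ennreal (lam * (norm h')\<^sup>2) + ennreal (R h')"
      using fPl unfolding reg_minimizer_def riskh by auto
    then show ?thesis using R0 params by (simp add: ennreal_plus[symmetric] del: ennreal_plus)
  qed
  have R01: "R 0 \<le> 1"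
  proof -
    have e0: "evl 0 x = 0" for x using linear_0[OF H_lin[of x]] by simp
    have "R 0 \<le> (\<integral> z. 1 \<partial>P)" unfolding R_def
      using Lfb[of _ 0] by (intro integral_mono Lfi) auto
    then show ?thesis using prob_space.prob_space[OF P(1)] by simp
  qed
  have pw: "(lam powr (-1/2))\<^sup>2 = 1 / lam"
  proof -
    have "(lam powr (-1/2))\<^sup>2 = lam powr (-1/2) * lam powr (-1/2)" by (simp add: power2_eq_square)
    also have "\<dots> = lam powr (-1/2 + -1/2)" by (rule powr_add[symmetric])
    also have "\<dots> = inverse (lam powr 1)" by (simp add: powr_minus)
    also have "\<dots> = 1 / lam" using params by (simp add: divide_inverse)
    finally show ?thesis .
  qed
  have np1: "lam * (norm fPl)\<^sup>2 \<le> 1" using reg[of 0] R01 R0[of fPl] by simp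
  have nh1: "lam * (norm h)\<^sup>2 \<le> 1"
  proof -
    have "(norm h)\<^sup>2 \<le> (lam powr (-1/2))\<^sup>2" by (rule power_mono[OF hn norm_ge_zero])
    then have "(norm h)\<^sup>2 \<le> 1 / lam" unfolding pw .
    then show ?thesis using params by (simp add: field_simps)
  qed
  have fPln: "norm fPl \<le> lam powr (-1/2)"
  proof (rule power2_le_imp_le)
    show "(norm fPl)\<^sup>2 \<le> (lam powr (-1/2))\<^sup>2" unfolding pw using np1 params by (simp add: field_simps)
    show "0 \<le> lam powr (-1/2)" by simp
  qed
  define D where "D h' = (\<lambda>z. Lf h' z - Ls z)" for h'
  have Dm: "D h' \<in> borel_measurable P" for h' unfolding D_def using Lfm Lsm by measurable
  have var: "integrable P (\<lambda>z. (D h' z)\<^sup>2) \<and>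
     (\<integral> z. (D h' z)\<^sup>2 \<partial>P) \<le> c * (supnorm (evl h') X + 1) powr v * pow0 (R h' - Rs) \<theta> \<and>
     0 \<le> supnorm (evl h') X \<and> supnorm (evl h') X \<le> norm h'"
    if hn': "norm h' \<le> lam powr (-1/2)" for h'
  proof -
    have V: "(\<integral>\<^sup>+ z. ennreal ((D h' z)\<^sup>2) \<partial>P) \<le> ennreal (c * (supnorm (evl h') X + 1) powr v * pow0 (\<integral> z. D h' z \<partial>P) \<theta>)"
      using variance[OF hn'] unfolding D_def Lf_def Ls_def .
    have Dint: "(\<integral> z. D h' z \<partial>P) = R h' - Rs"
      unfolding D_def R_def Rs_def by (rule Bochner_Integration.integral_diff[OF Lfi Lsi])
    have D2m: "(\<lambda>z. (D h' z)\<^sup>2) \<in> borel_measurable P" using Dm by measurable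
    have D2i: "integrable P (\<lambda>z. (D h' z)\<^sup>2)"
    proof (rule integrableI_bounded[OF D2m])
      have "(\<integral>\<^sup>+ z. ennreal (norm ((D h' z)\<^sup>2)) \<partial>P) = (\<integral>\<^sup>+ z. ennreal ((D h' z)\<^sup>2) \<partial>P)" by simp
      also have "\<dots> \<le> ennreal (c * (supnorm (evl h') X + 1) powr v * pow0 (\<integral> z. D h' z \<partial>P) \<theta>)" by (rule V)
      also have "\<dots> < \<infinity>" by simp
      finally show "(\<integral>\<^sup>+ z. ennreal (norm ((D h' z)\<^sup>2)) \<partial>P) < \<infinity>" .
    qed
    have rhs0: "0 \<le> c * (supnorm (evl h') X + 1) powr v * pow0 (R h' - Rs) \<theta>"
      using params pow0_nonneg[of "R h' - Rs" \<theta>] by (intro mult_nonneg_nonneg) auto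
    have "ennreal (\<integral> z. (D h' z)\<^sup>2 \<partial>P) \<le> ennreal (c * (supnorm (evl h') X + 1) powr v * pow0 (R h' - Rs) \<theta>)"
    proof -
      have "ennreal (\<integral> z. (D h' z)\<^sup>2 \<partial>P) = (\<integral>\<^sup>+ z. ennreal ((D h' z)\<^sup>2) \<partial>P)"
        by (rule nn_integral_eq_integral[symmetric, OF D2i]) simp
      then show ?thesis using V unfolding Dint by simp
    qed
    then have I: "(\<integral> z. (D h' z)\<^sup>2 \<partial>P) \<le> c * (supnorm (evl h') X + 1) powr v * pow0 (R h' - Rs) \<theta>"
      using rhs0 by simp
    obtain x0 where x0: "x0 \<in> X" using Xne by auto
    have bdd: "bdd_above ((\<lambda>x. \<bar>evl h' x\<bar>) ` X)" using H_sup by (intro bdd_aboveI2) auto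
    have "0 \<le> \<bar>evl h' x0\<bar>" by simp
    also have "\<dots> \<le> supnorm (evl h') X" unfolding supnorm_def by (rule cSUP_upper[OF x0 bdd])
    finally have s0: "0 \<le> supnorm (evl h') X" .
    have s1: "supnorm (evl h') X \<le> norm h'" unfolding supnorm_def
      using H_sup by (intro cSUP_least Xne) auto
    show ?thesis using D2i I s0 s1 by auto
  qed
  define g where "g = (\<lambda>z. (lam * (norm h)\<^sup>2 + L (snd z) (evl h (fst z)))
                 - (lam * (norm fPl)\<^sup>2 + L (snd z) (evl fPl (fst z))))"
  have gLf: "g = (\<lambda>z. (lam * (norm h)\<^sup>2 + Lf h z) - (lam * (norm fPl)\<^sup>2 + Lf fPl z))"
    unfolding g_def Lf_def ..
  note PS = prob_space.prob_space[OF P(1)]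
  have Eg: "(\<integral> z. g z \<partial>P) = lam * (norm h)\<^sup>2 + R h - (lam * (norm fPl)\<^sup>2 + R fPl)"
  proof -
    have "(\<integral> z. g z \<partial>P) = (\<integral> z. lam * (norm h)\<^sup>2 + Lf h z \<partial>P) - (\<integral> z. lam * (norm fPl)\<^sup>2 + Lf fPl z \<partial>P)"
      unfolding gLf by (rule Bochner_Integration.integral_diff) (simp_all add: Lfi)
    also have "\<dots> = lam * (norm h)\<^sup>2 + R h - (lam * (norm fPl)\<^sup>2 + R fPl)"
      using PS by (simp add: Lfi R_def)
    finally show ?thesis .
  qed
  define F where "F = (\<lambda>z. 4 * (lam * (norm h)\<^sup>2)\<^sup>2 + 4 * (D h z)\<^sup>2 + 4 * (lam * (norm fPl)\<^sup>2)\<^sup>2 + 4 * (D fPl z)\<^sup>2)"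
  note vh1 = var[OF hn, THEN conjunct1] and vh2 = var[OF hn, THEN conjunct2, THEN conjunct1]
    and vh3 = var[OF hn, THEN conjunct2, THEN conjunct2, THEN conjunct1]
    and vh4 = var[OF hn, THEN conjunct2, THEN conjunct2, THEN conjunct2]
  note vp1 = var[OF fPln, THEN conjunct1] and vp2 = var[OF fPln, THEN conjunct2, THEN conjunct1]
    and vp3 = var[OF fPln, THEN conjunct2, THEN conjunct2, THEN conjunct1]
    and vp4 = var[OF fPln, THEN conjunct2, THEN conjunct2, THEN conjunct2]
  have Fi: "integrable P F" unfolding F_def using vh1 vp1 by simp
  have FI: "(\<integral> z. F z \<partial>P) = 4 * (lam * (norm h)\<^sup>2)\<^sup>2 + 4 * (\<integral> z. (D h z)\<^sup>2 \<partial>P) + 4 * (lam * (norm fPl)\<^sup>2)\<^sup>2 + 4 * (\<integral> z. (D fPl z)\<^sup>2 \<partial>P)"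
    unfolding F_def using vh1 vp1 PS by simp
  have gF: "(g z)\<^sup>2 \<le> F z" for z
  proof -
    have "g z = lam * (norm h)\<^sup>2 + D h z - lam * (norm fPl)\<^sup>2 - D fPl z"
      unfolding gLf D_def by simp
    then show ?thesis unfolding F_def by (simp only: sq4)
  qed
  have g2m: "(\<lambda>z. (g z)\<^sup>2) \<in> borel_measurable P" unfolding gLf using Lfm by measurable
  have g2i: "integrable P (\<lambda>z. (g z)\<^sup>2)"
  proof (rule Bochner_Integration.integrable_bound[OF Fi g2m], rule AE_I2)
    fix z
    have "(g z)\<^sup>2 \<le> \<bar>F z\<bar>" using gF[of z] abs_ge_self[of "F z"] by linarith
    then show "norm ((g z)\<^sup>2) \<le> norm (F z)" by simp
  qed
  have G: "(\<integral> z. (g z)\<^sup>2 \<partial>P) \<le> (\<integral> z. F z \<partial>P)"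
    by (rule integral_mono[OF g2i Fi gF])
  have ea: "lam * (norm fPl)\<^sup>2 + enn2real (risk L P (evl fPl)) - enn2real (risk L P fstar) = lam * (norm fPl)\<^sup>2 + R fPl - Rs"
    using riskh risks R0 Rs0 by simp
  have main: "(\<integral> z. (g z)\<^sup>2 \<partial>P) \<le> 16 * c * (sqrt ((lam * (norm h)\<^sup>2 + R h - (lam * (norm fPl)\<^sup>2 + R fPl)) / lam)
            + sqrt ((lam * (norm fPl)\<^sup>2 + R fPl - Rs) / lam) + 1) powr v
          * (pow0 (lam * (norm h)\<^sup>2 + R h - (lam * (norm fPl)\<^sup>2 + R fPl)) \<theta> + 2 * pow0 (lam * (norm fPl)\<^sup>2 + R fPl - Rs) \<theta>)"
    by (rule main_alg[OF params(5) params(2) params(1) params(3) params(4) norm_ge_zero norm_ge_zero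
          RsR RsR reg nh1 np1 vh3 vh4 vp3 vp4 vh2 vp2 G[unfolded FI]])
  show "let g = (\<lambda>z. (lam * (norm h)\<^sup>2 + L (snd z) (evl h (fst z)))
                 - (lam * (norm fPl)\<^sup>2 + L (snd z) (evl fPl (fst z))));
         a = lam * (norm fPl)\<^sup>2 + enn2real (risk L P (evl fPl)) - enn2real (risk L P fstar);
         Eg = (\<integral> z. g z \<partial>P)
     in (\<integral> z. (g z)\<^sup>2 \<partial>P)
        \<le> 16 * c * (sqrt (Eg / lam) + sqrt (a / lam) + 1) powr v * (pow0 Eg \<theta> + 2 * pow0 a \<theta>)"
    unfolding Let_def g_def[symmetric] ea Eg using main .
qed

end
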